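(* For every $n\ge1$, the minimum number of flippable faces of a locally valid MV assignment of $M_{2,n}$ is $2$. Moreover, for every $n\ge 2$, exactly four locally valid MV assignments of $M_{2,n}$ have exactly $2$ flippable faces, and each of them is colored magenta (i.e., has the same number of flippable faces as its restriction to $M_{2,n-1}$).
   Context: The $2\times n$ Miura-ori $M_{2,n}$ ($n\ge1$) has faces $\alpha_{i,j}$ ($i\in\{1,2\}$, $j\in\{1,\dots,n\}$), interior vertices $x_1,\dots,x_{n-1}$, and creases $e_0$ and $e_{3k-1},e_{3k},e_{3k+1}$ ($k=1,\dots,n-1$). At $x_k$ the creases are left $e_{3k-3}$, top $e_{3k-1}$, right $e_{3k}$, bottom $e_{3k+1}$. Face $\alpha_{1,j}$ is bordered by those of $e_{3j-4}$ (iff $j\ge2$), $e_{3j-3}$, $e_{3j-1}$ (iff $j\le n-1$); $\alpha_{2,j}$ by those of $e_{3j-2}$ (iff $j\ge2$), $e_{3j-3}$, $e_{3j+1}$ (iff $j\le n-1$). An MV assignment $\mu$ maps creases to $\{1,-1\}$ (mountain/valley); it is locally valid if for each $k$ exactly one of $\mu(e_{3k-1}),\mu(e_{3k}),\mu(e_{3k+1})$ differs from $\mu(e_{3k-3})$. The face flip $\mu_\alpha$ negates $\mu$ on the creases bordering $\alpha$; $\alpha$ is flippable under $\mu$ if $\mu,\mu_\alpha$ are both locally valid; $f(\mu)$ is the number of flippable faces (the degree of $\mu$ in the origami flip graph). For $n\ge2$, the restriction of a locally valid assignment $\mu'$ of $M_{2,n}$ to the creases of $M_{2,n-1}$ (all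 creases except $e_{3n-4},e_{3n-3},e_{3n-2}$) is a locally valid assignment $\mu$ of $M_{2,n-1}$; $\mu'$ is colored blue, orange or magenta according as $f(\mu')-f(\mu)$ equals $2$, $1$ or $0$. Both locally valid assignments of $M_{2,1}$ are colored blue. *)

theory Defs
  imports Main
begin

(* Crease e_m is represented by the natural number m.
   Creases of M_{2,n}: e_0 and e_{3k-1}, e_{3k}, e_{3k+1} for k = 1..n-1. *)
definition creases :: "nat \<Rightarrow> nat set" where
  "creases n = {0} \<union> (\<Union>k\<in>{1..n-1}. {3*k-1, 3*k, 3*k+1})"

definition faces :: "nat \<Rightarrow> (nat \<times> nat) set" where
  "faces n = {1,2} \<times> {1..n}"

definition border :: "nat \<Rightarrow> nat \<times> nat \<Rightarrow> nat set" where
  "border n a = (case a of (i, j) \<Rightarrow>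
     if i = 1 then {3*j-3} \<union> (if j \<ge> 2 then {3*j-4} else {}) \<union> (if j \<le> n-1 then {3*j-1} else {})
     else {3*j-3} \<union> (if j \<ge> 2 then {3*j-2} else {}) \<union> (if j \<le> n-1 then {3*j+1} else {}))"

(* An MV assignment of M_{2,n}: values in {1,-1} on the creases; extensionally 0 off the creases
   (so that assignments correspond bijectively to functions creases n -> {1,-1}). *)
definition MV :: "nat \<Rightarrow> (nat \<Rightarrow> int) set" where
  "MV n = {mu. (\<forall>c\<in>creases n. mu c \<in> {1, -1}) \<and> (\<forall>c. c \<notin> creases n \<longrightarrow> mu c = 0)}"

definition valid_at :: "(nat \<Rightarrow> int) \<Rightarrow> nat \<Rightarrow> bool" where
  "valid_at mu k = (card {c \<in> {3*k-1, 3*k, 3*k+1}. mu c \<noteq> mu (3*k-3)} = 1)"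

definition locally_valid :: "nat \<Rightarrow> (nat \<Rightarrow> int) \<Rightarrow> bool" where
  "locally_valid n mu = (mu \<in> MV n \<and> (\<forall>k\<in>{1..n-1}. valid_at mu k))"

definition LV :: "nat \<Rightarrow> (nat \<Rightarrow> int) set" where
  "LV n = {mu. locally_valid n mu}"

definition flip :: "nat \<Rightarrow> (nat \<Rightarrow> int) \<Rightarrow> nat \<times> nat \<Rightarrow> (nat \<Rightarrow> int)" where
  "flip n mu a = (\<lambda>c. if c \<in> border n a then - mu c else mu c)"

definition flippable :: "nat \<Rightarrow> (nat \<Rightarrow> int) \<Rightarrow> nat \<times> nat \<Rightarrow> bool" where
  "flippable n mu a = (locally_valid n mu \<and> locally_valid n (flip n mu a))"

definition nflip :: "nat \<Rightarrow> (nat \<Rightarrow> int) \<Rightarrow> nat" where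
  "nflip n mu = card {a \<in> faces n. flippable n mu a}"

definition restr :: "nat \<Rightarrow> (nat \<Rightarrow> int) \<Rightarrow> (nat \<Rightarrow> int)" where
  "restr n mu = (\<lambda>c. if c \<in> creases (n-1) then mu c else 0)"

(* coloring for n >= 2: blue / orange / magenta according as f(mu') - f(mu) = 2, 1, 0 *)
definition magenta :: "nat \<Rightarrow> (nat \<Rightarrow> int) \<Rightarrow> bool" where
  "magenta n mu = (int (nflip n mu) - int (nflip (n-1) (restr n mu)) = 0)"

end

theory Submission imports Defs begin

definition ex1 :: "bool \<Rightarrow> bool \<Rightarrow> bool \<Rightarrow> bool" where
  "ex1 p q r = ((p \<and> \<not>q \<and> \<not>r) \<or> (\<not>p \<and> q \<and> \<not>r) \<or> (\<not>p \<and> \<not>q \<and> r))"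

lemma card_filter3:
  assumes "x \<noteq> y" "x \<noteq> z" "y \<noteq> z"
  shows "card {c\<in>{x,y,z}. P c} = 1 \<longleftrightarrow> ex1 (P x) (P y) (P z)"
proof -
  have eq: "{c\<in>{x,y,z}. P c} = (if P x then {x} else {}) \<union> (if P y then {y} else {}) \<union> (if P z then {z} else {})"
    by auto
  show ?thesis unfolding eq using assms
    by (cases "P x"; cases "P y"; cases "P z") (simp_all add: ex1_def)
qed

lemma valid_at_iff:
  assumes "k \<ge> 1"
  shows "valid_at mu k \<longleftrightarrow> ex1 (mu (3*k-1) \<noteq> mu (3*k-3)) (mu (3*k) \<noteq> mu (3*k-3)) (mu (3*k+1) \<noteq> mu (3*k-3))"
  unfolding valid_at_def using assms by (subst card_filter3) auto

lemma border1: "c \<in> border n (1,j) \<longleftrightarrow> c = 3*j-3 \<or> (j\<ge>2 \<and> c = 3*j-4) \<or> (j \<le> n-1 \<and> c = 3*j-1)"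
  by (auto simp: border_def)
lemma border2: "c \<in> border n (2,j) \<longleftrightarrow> c = 3*j-3 \<or> (j\<ge>2 \<and> c = 3*j-2) \<or> (j \<le> n-1 \<and> c = 3*j+1)"
  by (auto simp: border_def)

lemma creases_iff: "c \<in> creases n \<longleftrightarrow> c = 0 \<or> (\<exists>k. 1 \<le> k \<and> k \<le> n-1 \<and> (c = 3*k-1 \<or> c = 3*k \<or> c = 3*k+1))"
  by (auto simp: creases_def)


lemma border1': "c \<in> border n (Suc 0,j) \<longleftrightarrow> c = 3*j-3 \<or> (j\<ge>2 \<and> c = 3*j-4) \<or> (j \<le> n-1 \<and> c = 3*j-1)"
  by (auto simp: border_def)
lemma border2': "c \<in> border n (Suc (Suc 0),j) \<longleftrightarrow> c = 3*j-3 \<or> (j\<ge>2 \<and> c = 3*j-2) \<or> (j \<le> n-1 \<and> c = 3*j+1)"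
  by (auto simp: border_def)

lemma flipL1: assumes "k \<ge> 1"  shows "valid_at (flip n mu (1, Suc k)) k \<longleftrightarrow>
   ex1 (- mu (3*k-1) \<noteq> mu (3*k-3)) (- mu (3*k) \<noteq> mu (3*k-3)) (mu (3*k+1) \<noteq> mu (3*k-3))"
proof -
  have m: "3*k-3 \<notin> border n (1, Suc k)" "3*k-1 \<in> border n (1, Suc k)" "3*k \<in> border n (1, Suc k)" "3*k+1 \<notin> border n (1, Suc k)" using assms by (auto simp: border_def)
  show ?thesis unfolding valid_at_iff[OF assms(1)] flip_def using m by simp
qed
lemma flipR1: assumes "k \<ge> 1" "k \<le> n - 1" shows "valid_at (flip n mu (1, k)) k \<longleftrightarrow>
   ex1 (- mu (3*k-1) \<noteq> - mu (3*k-3)) (mu (3*k) \<noteq> - mu (3*k-3)) (mu (3*k+1) \<noteq> - mu (3*k-3))"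
proof -
  have m: "3*k-3 \<in> border n (1, k)" "3*k-1 \<in> border n (1, k)" "3*k \<notin> border n (1, k)" "3*k+1 \<notin> border n (1, k)" using assms by (auto simp: border_def)
  show ?thesis unfolding valid_at_iff[OF assms(1)] flip_def using m by simp
qed
lemma flipL2: assumes "k \<ge> 1"  shows "valid_at (flip n mu (2, Suc k)) k \<longleftrightarrow>
   ex1 (mu (3*k-1) \<noteq> mu (3*k-3)) (- mu (3*k) \<noteq> mu (3*k-3)) (- mu (3*k+1) \<noteq> mu (3*k-3))"
proof -
  have m: "3*k-3 \<notin> border n (2, Suc k)" "3*k-1 \<notin> border n (2, Suc k)" "3*k \<in> border n (2, Suc k)" "3*k+1 \<in> border n (2, Suc k)" using assms by (auto simp: border_def)
  show ?thesis unfolding valid_at_iff[OF assms(1)] flip_def using m by simp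
qed
lemma flipR2: assumes "k \<ge> 1" "k \<le> n - 1" shows "valid_at (flip n mu (2, k)) k \<longleftrightarrow>
   ex1 (mu (3*k-1) \<noteq> - mu (3*k-3)) (mu (3*k) \<noteq> - mu (3*k-3)) (- mu (3*k+1) \<noteq> - mu (3*k-3))"
proof -
  have m: "3*k-3 \<in> border n (2, k)" "3*k-1 \<notin> border n (2, k)" "3*k \<notin> border n (2, k)" "3*k+1 \<in> border n (2, k)" using assms by (auto simp: border_def)
  show ?thesis unfolding valid_at_iff[OF assms(1)] flip_def using m by simp
qed

lemma flipO: assumes "k \<ge> 1" "i = 1 \<or> i = 2" "k \<noteq> j" "Suc k \<noteq> j" "j \<ge> 1"
  shows "valid_at (flip n mu (i, j)) k \<longleftrightarrow> valid_at mu k"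
proof -
  have m: "3*k-3 \<notin> border n (i,j)" "3*k-1 \<notin> border n (i,j)" "3*k \<notin> border n (i,j)" "3*k+1 \<notin> border n (i,j)"
    using assms by (auto simp: border_def) presburger+
  show ?thesis unfolding valid_at_iff[OF assms(1)] flip_def using m by simp
qed
definition Lv :: "(nat \<Rightarrow> int) \<Rightarrow> nat \<Rightarrow> int" where "Lv mu k = mu (3*k-3)"
definition Tv :: "(nat \<Rightarrow> int) \<Rightarrow> nat \<Rightarrow> int" where "Tv mu k = mu (3*k-1)"
definition Rv :: "(nat \<Rightarrow> int) \<Rightarrow> nat \<Rightarrow> int" where "Rv mu k = mu (3*k)"
definition Bv :: "(nat \<Rightarrow> int) \<Rightarrow> nat \<Rightarrow> int" where "Bv mu k = mu (3*k+1)"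

lemma creases_vert: assumes "1 \<le> k" "k \<le> n-1"
  shows "3*k-3 \<in> creases n" "3*k-1 \<in> creases n" "3*k \<in> creases n" "3*k+1 \<in> creases n"
proof -
  show "3*k-3 \<in> creases n"
  proof (cases "k = 1")
    case True then show ?thesis by (simp add: creases_def)
  next
    case False
    then have "1 \<le> k-1" "k-1 \<le> n-1" "3*k-3 = 3*(k-1)" using assms by auto
    then show ?thesis unfolding creases_iff by blast
  qed
  show "3*k-1 \<in> creases n" "3*k \<in> creases n" "3*k+1 \<in> creases n"
    unfolding creases_iff using assms by blast+
qed

lemma MV_pm: "mu \<in> MV n \<Longrightarrow> c \<in> creases n \<Longrightarrow> mu c \<in> {1, -1}"
  by (auto simp: MV_def)

lemma flip_MV: "mu \<in> MV n \<Longrightarrow> flip n mu a \<in> MV n"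
  by (auto simp: MV_def flip_def)

lemma LV_vert: assumes "mu \<in> LV n" "1 \<le> k" "k \<le> n-1"
  shows "Lv mu k \<in> {1,-1}" "Tv mu k \<in> {1,-1}" "Rv mu k \<in> {1,-1}" "Bv mu k \<in> {1,-1}"
    "ex1 (Tv mu k \<noteq> Lv mu k) (Rv mu k \<noteq> Lv mu k) (Bv mu k \<noteq> Lv mu k)"
proof -
  have mv: "mu \<in> MV n" and va: "valid_at mu k" using assms by (auto simp: LV_def locally_valid_def)
  show "Lv mu k \<in> {1,-1}" "Tv mu k \<in> {1,-1}" "Rv mu k \<in> {1,-1}" "Bv mu k \<in> {1,-1}"
    unfolding Lv_def Tv_def Rv_def Bv_def using MV_pm[OF mv] creases_vert[OF assms(2,3)] by blast+
  show "ex1 (Tv mu k \<noteq> Lv mu k) (Rv mu k \<noteq> Lv mu k) (Bv mu k \<noteq> Lv mu k)"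
    using va valid_at_iff[OF assms(2)] unfolding Lv_def Tv_def Rv_def Bv_def by simp
qed

lemma AL1: "(a::int)\<in>{1,-1} \<Longrightarrow> t\<in>{1,-1} \<Longrightarrow> r\<in>{1,-1} \<Longrightarrow> b\<in>{1,-1} \<Longrightarrow> ex1 (t\<noteq>a) (r\<noteq>a) (b\<noteq>a) \<Longrightarrow>
  ex1 (-t\<noteq>a) (-r\<noteq>a) (b\<noteq>a) \<longleftrightarrow> b = a" by (auto simp: ex1_def)
lemma AR1: "(a::int)\<in>{1,-1} \<Longrightarrow> t\<in>{1,-1} \<Longrightarrow> r\<in>{1,-1} \<Longrightarrow> b\<in>{1,-1} \<Longrightarrow> ex1 (t\<noteq>a) (r\<noteq>a) (b\<noteq>a) \<Longrightarrow>
  ex1 (-t\<noteq>-a) (r\<noteq>-a) (b\<noteq>-a) \<longleftrightarrow> t = a" by (auto simp: ex1_def)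
lemma AL2: "(a::int)\<in>{1,-1} \<Longrightarrow> t\<in>{1,-1} \<Longrightarrow> r\<in>{1,-1} \<Longrightarrow> b\<in>{1,-1} \<Longrightarrow> ex1 (t\<noteq>a) (r\<noteq>a) (b\<noteq>a) \<Longrightarrow>
  ex1 (t\<noteq>a) (-r\<noteq>a) (-b\<noteq>a) \<longleftrightarrow> t = a" by (auto simp: ex1_def)
lemma AR2: "(a::int)\<in>{1,-1} \<Longrightarrow> t\<in>{1,-1} \<Longrightarrow> r\<in>{1,-1} \<Longrightarrow> b\<in>{1,-1} \<Longrightarrow> ex1 (t\<noteq>a) (r\<noteq>a) (b\<noteq>a) \<Longrightarrow>
  ex1 (t\<noteq>-a) (r\<noteq>-a) (-b\<noteq>-a) \<longleftrightarrow> b = a" by (auto simp: ex1_def)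
lemma flipv1: assumes "mu \<in> LV n" "1 \<le> j" "1 \<le> k" "k \<le> n-1"
  shows "valid_at (flip n mu (1,j)) k \<longleftrightarrow> (Suc k = j \<longrightarrow> Bv mu k = Lv mu k) \<and> (k = j \<longrightarrow> Tv mu k = Lv mu k)"
proof -
  note v = LV_vert[OF assms(1,3,4)]
  consider "Suc k = j" | "k = j" | "Suc k \<noteq> j" "k \<noteq> j" by blast
  then show ?thesis
  proof cases
    case 1
    have e: "valid_at (flip n mu (1,j)) k \<longleftrightarrow> ex1 (- Tv mu k \<noteq> Lv mu k) (- Rv mu k \<noteq> Lv mu k) (Bv mu k \<noteq> Lv mu k)"
      using flipL1[OF assms(3), of n mu] unfolding 1[symmetric] Lv_def Tv_def Rv_def Bv_def by simp
    show ?thesis unfolding e using 1 AL1[OF v] by simp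
  next
    case 2
    have e: "valid_at (flip n mu (1,j)) k \<longleftrightarrow> ex1 (- Tv mu k \<noteq> - Lv mu k) (Rv mu k \<noteq> - Lv mu k) (Bv mu k \<noteq> - Lv mu k)"
      using flipR1[OF assms(3,4), of mu] unfolding 2[symmetric] Lv_def Tv_def Rv_def Bv_def by simp
    show ?thesis unfolding e using 2 AR1[OF v] by simp
  next
    case 3
    have "valid_at mu k" using assms by (auto simp: LV_def locally_valid_def)
    then show ?thesis using flipO[OF assms(3) _ 3(2) 3(1) assms(2), of 1 n mu] 3 by simp
  qed
qed

lemma flipv2: assumes "mu \<in> LV n" "1 \<le> j" "1 \<le> k" "k \<le> n-1"
  shows "valid_at (flip n mu (2,j)) k \<longleftrightarrow> (Suc k = j \<longrightarrow> Tv mu k = Lv mu k) \<and> (k = j \<longrightarrow> Bv mu k = Lv mu k)"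
proof -
  note v = LV_vert[OF assms(1,3,4)]
  consider "Suc k = j" | "k = j" | "Suc k \<noteq> j" "k \<noteq> j" by blast
  then show ?thesis
  proof cases
    case 1
    have e: "valid_at (flip n mu (2,j)) k \<longleftrightarrow> ex1 (Tv mu k \<noteq> Lv mu k) (- Rv mu k \<noteq> Lv mu k) (- Bv mu k \<noteq> Lv mu k)"
      using flipL2[OF assms(3), of n mu] unfolding 1[symmetric] Lv_def Tv_def Rv_def Bv_def by simp
    show ?thesis unfolding e using 1 AL2[OF v] by simp
  next
    case 2
    have e: "valid_at (flip n mu (2,j)) k \<longleftrightarrow> ex1 (Tv mu k \<noteq> - Lv mu k) (Rv mu k \<noteq> - Lv mu k) (- Bv mu k \<noteq> - Lv mu k)"
      using flipR2[OF assms(3,4), of mu] unfolding 2[symmetric] Lv_def Tv_def Rv_def Bv_def by simp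
    show ?thesis unfolding e using 2 AR2[OF v] by simp
  next
    case 3
    have "valid_at mu k" using assms by (auto simp: LV_def locally_valid_def)
    then show ?thesis using flipO[OF assms(3) _ 3(2) 3(1) assms(2), of 2 n mu] 3 by simp
  qed
qed

lemma flippable1: assumes "mu \<in> LV n" "1 \<le> j"
  shows "flippable n mu (1,j) \<longleftrightarrow> (\<forall>k\<in>{1..n-1}. (Suc k = j \<longrightarrow> Bv mu k = Lv mu k) \<and> (k = j \<longrightarrow> Tv mu k = Lv mu k))"
proof -
  have "mu \<in> MV n" "locally_valid n mu" using assms by (auto simp: LV_def locally_valid_def)
  then show ?thesis unfolding flippable_def locally_valid_def using flipv1[OF assms] flip_MV by auto
qed

lemma flippable2: assumes "mu \<in> LV n" "1 \<le> j"
  shows "flippable n mu (2,j) \<longleftrightarrow> (\<forall>k\<in>{1..n-1}. (Suc k = j \<longrightarrow> Tv mu k = Lv mu k) \<and> (k = j \<longrightarrow> Bv mu k = Lv mu k))"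
proof -
  have "mu \<in> MV n" "locally_valid n mu" using assms by (auto simp: LV_def locally_valid_def)
  then show ?thesis unfolding flippable_def locally_valid_def using flipv2[OF assms] flip_MV by auto
qed
lemma faces_fin: "finite (faces n)" by (simp add: faces_def)

lemma nflip_le: "nflip n mu \<le> card (faces n)"
  unfolding nflip_def by (rule card_mono[OF faces_fin]) auto

lemma ends:
  assumes "mu \<in> LV n" "n \<ge> 2"
  shows "flippable n mu (1,1) \<longleftrightarrow> Tv mu 1 = Lv mu 1"
    "flippable n mu (2,1) \<longleftrightarrow> Bv mu 1 = Lv mu 1"
    "flippable n mu (1,n) \<longleftrightarrow> Bv mu (n-1) = Lv mu (n-1)"
    "flippable n mu (2,n) \<longleftrightarrow> Tv mu (n-1) = Lv mu (n-1)"
proof -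
  have a: "1 \<in> {1..n-1}" "n-1 \<in> {1..n-1}" "Suc (n-1) = n" using assms by auto
  have n1: "1 \<le> n" using assms by auto
  show "flippable n mu (1,1) \<longleftrightarrow> Tv mu 1 = Lv mu 1"
    unfolding flippable1[OF assms(1) order_refl] using a by auto
  show "flippable n mu (2,1) \<longleftrightarrow> Bv mu 1 = Lv mu 1"
    unfolding flippable2[OF assms(1) order_refl] using a by auto
  show "flippable n mu (1,n) \<longleftrightarrow> Bv mu (n-1) = Lv mu (n-1)"
    unfolding flippable1[OF assms(1) n1] using a assms by auto
  show "flippable n mu (2,n) \<longleftrightarrow> Tv mu (n-1) = Lv mu (n-1)"
    unfolding flippable2[OF assms(1) n1] using a assms by auto
qed

lemma TB: assumes "mu \<in> LV n" "1 \<le> k" "k \<le> n-1"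
  shows "Tv mu k = Lv mu k \<or> Bv mu k = Lv mu k"
    "Tv mu k \<noteq> Lv mu k \<Longrightarrow> Bv mu k = Lv mu k \<and> Rv mu k = Lv mu k"
    "Bv mu k \<noteq> Lv mu k \<Longrightarrow> Tv mu k = Lv mu k \<and> Rv mu k = Lv mu k"
  using LV_vert(5)[OF assms] by (auto simp: ex1_def)

lemma two_in_card:
  assumes "x \<in> A" "y \<in> A" "x \<noteq> y" "finite A" shows "2 \<le> card A"
proof -
  have "card {x,y} \<le> card A" using assms by (intro card_mono) auto
  then show ?thesis using assms by simp
qed

lemma endpoints:
  assumes "mu \<in> LV n" "n \<ge> 2"
  obtains x y where "x \<in> {(1,1),(2,1)}" "y \<in> {(1,n),(2,n)}"
    "x \<in> {a \<in> faces n. flippable n mu a}" "y \<in> {a \<in> faces n. flippable n mu a}"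
proof -
  have n1: "1 \<le> n-1" using assms by auto
  have f: "(1,1) \<in> faces n" "(2,1) \<in> faces n" "(1,n) \<in> faces n" "(2,n) \<in> faces n"
    using assms by (auto simp: faces_def)
  have "Tv mu 1 = Lv mu 1 \<or> Bv mu 1 = Lv mu 1" using TB(1)[OF assms(1) order_refl n1] .
  then obtain x where x: "x \<in> {(1,1),(2,1)}" "flippable n mu x"
    using ends[OF assms] by blast
  have "Tv mu (n-1) = Lv mu (n-1) \<or> Bv mu (n-1) = Lv mu (n-1)" using TB(1)[OF assms(1) n1 order_refl] .
  then obtain y where y: "y \<in> {(1,n),(2,n)}" "flippable n mu y"
    using ends[OF assms] by blast
  show ?thesis using that[OF x(1) y(1)] x y f by auto
qed

lemma lower: assumes "n \<ge> 1" "mu \<in> LV n" shows "2 \<le> nflip n mu"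
proof (cases "n = 1")
  case True
  have "flippable n mu (1,1)" "flippable n mu (2,1)"
    using flippable1[OF assms(2) order_refl] flippable2[OF assms(2) order_refl] True by auto
  moreover have "(1,1) \<in> faces n" "(2,1) \<in> faces n" using True by (auto simp: faces_def)
  ultimately show ?thesis unfolding nflip_def
    by (intro two_in_card[of "(1,1)" _ "(2,1)"]) (auto simp: faces_fin)
next
  case False
  then have n2: "n \<ge> 2" using assms by auto
  obtain x y where xy: "x \<in> {(1,1),(2,1)}" "y \<in> {(1,n),(2,n)}"
    "x \<in> {a \<in> faces n. flippable n mu a}" "y \<in> {a \<in> faces n. flippable n mu a}"
    using endpoints[OF assms(2) n2] .
  have "x \<noteq> y" using xy(1,2) n2 by auto
  then show ?thesis unfolding nflip_def using xy by (intro two_in_card) (auto simp: faces_fin)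
qed
lemma upper:
  assumes mu: "mu \<in> LV n" and n2: "n \<ge> 2" and le: "nflip n mu \<le> 2"
  shows "(\<forall>k\<in>{1..n-1}. Bv mu k \<noteq> Lv mu k) \<or> (\<forall>k\<in>{1..n-1}. Tv mu k \<noteq> Lv mu k)"
proof -
  define S where "S = {a \<in> faces n. flippable n mu a}"
  have finS: "finite S" unfolding S_def using faces_fin by auto
  obtain x y where xy: "x \<in> {(1,1),(2,1)}" "y \<in> {(1,n),(2,n)}" "x \<in> S" "y \<in> S"
    using endpoints[OF mu n2] unfolding S_def .
  have cS: "card S \<le> 2" using le unfolding S_def nflip_def .
  have Z: "z = x \<or> z = y" if "z \<in> S" for z
  proof (rule ccontr)
    assume "\<not> (z = x \<or> z = y)"
    moreover have "x \<noteq> y" using xy(1,2) n2 by auto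
    moreover have "card {x,y,z} \<le> card S" using finS xy that by (intro card_mono) auto
    ultimately show False using cS by auto
  qed
  have mid: "\<not> flippable n mu (i,j)" if "i = 1 \<or> i = 2" "2 \<le> j" "j \<le> n-1" for i j
  proof
    assume "flippable n mu (i,j)"
    then have "(i,j) \<in> S" unfolding S_def faces_def using that by auto
    then show False using Z xy(1,2) that by fastforce
  qed
  have n1: "1 \<le> n-1" using n2 by auto
  have not_both: "\<not> (Tv mu 1 = Lv mu 1 \<and> Bv mu 1 = Lv mu 1)"
  proof
    assume "Tv mu 1 = Lv mu 1 \<and> Bv mu 1 = Lv mu 1"
    then have "(1,1) \<in> S" "(2,1) \<in> S" using ends[OF mu n2] n2 unfolding S_def faces_def by auto
    then show False using Z xy(1,2) n2 by fastforce
  qed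
  show ?thesis
  proof (cases "Bv mu 1 \<noteq> Lv mu 1")
    case True
    have "\<forall>k. 1 \<le> k \<longrightarrow> k \<le> n-1 \<longrightarrow> Bv mu k \<noteq> Lv mu k"
    proof
      fix k show "1 \<le> k \<longrightarrow> k \<le> n-1 \<longrightarrow> Bv mu k \<noteq> Lv mu k"
      proof (induction k)
        case 0 then show ?case by simp
      next
        case (Suc k)
        show ?case
        proof (cases "k = 0")
          case True then show ?thesis using \<open>Bv mu 1 \<noteq> Lv mu 1\<close> by simp
        next
          case False
          show ?thesis
          proof (intro impI notI)
            assume h: "1 \<le> Suc k" "Suc k \<le> n-1" "Bv mu (Suc k) = Lv mu (Suc k)"
            have "Bv mu k \<noteq> Lv mu k" using Suc.IH False h by auto
            then have "Tv mu k = Lv mu k" using TB(3)[OF mu, of k] False h by auto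
            then have "flippable n mu (2, Suc k)"
              unfolding flippable2[OF mu h(1)] using h(3) by auto
            then show False using mid[of 2 "Suc k"] h False by auto
          qed
        qed
      qed
    qed
    then show ?thesis by auto
  next
    case False
    then have T1: "Tv mu 1 \<noteq> Lv mu 1" using not_both by auto
    have "\<forall>k. 1 \<le> k \<longrightarrow> k \<le> n-1 \<longrightarrow> Tv mu k \<noteq> Lv mu k"
    proof
      fix k show "1 \<le> k \<longrightarrow> k \<le> n-1 \<longrightarrow> Tv mu k \<noteq> Lv mu k"
      proof (induction k)
        case 0 then show ?case by simp
      next
        case (Suc k)
        show ?case
        proof (cases "k = 0")
          case True then show ?thesis using T1 by simp
        next
          case False
          show ?thesis
          proof (intro impI notI)
            assume h: "1 \<le> Suc k" "Suc k \<le> n-1" "Tv mu (Suc k) = Lv mu (Suc k)"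
            have "Tv mu k \<noteq> Lv mu k" using Suc.IH False h by auto
            then have "Bv mu k = Lv mu k" using TB(2)[OF mu, of k] False h by auto
            then have "flippable n mu (1, Suc k)"
              unfolding flippable1[OF mu h(1)] using h(3) by auto
            then show False using mid[of 1 "Suc k"] h False by auto
          qed
        qed
      qed
    qed
    then show ?thesis by auto
  qed
qed
definition mB :: "nat \<Rightarrow> int \<Rightarrow> nat \<Rightarrow> int" where
  "mB n s = (\<lambda>c. if c \<in> creases n then (if c mod 3 = 1 then -s else s) else 0)"
definition mT :: "nat \<Rightarrow> int \<Rightarrow> nat \<Rightarrow> int" where
  "mT n s = (\<lambda>c. if c \<in> creases n then (if c mod 3 = 2 then -s else s) else 0)"

lemma mods: assumes "1 \<le> k" shows "(3*k-3) mod 3 = (0::nat)" "(3*k-1) mod 3 = 2" "(3*k) mod 3 = 0" "(3*k+1) mod 3 = 1"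
proof -
  obtain m where k: "k = Suc m" using assms by (cases k) auto
  have "3*k-3 = 3*m" "3*k-1 = 3*m+2" using k by auto
  moreover have "(3*m+2) mod 3 = (2::nat)" by presburger
  ultimately show "(3*k-3) mod 3 = (0::nat)" "(3*k-1) mod 3 = 2" "(3*k) mod 3 = 0" "(3*k+1) mod 3 = 1"
    by simp_all
qed

lemma mB_vals: assumes "1 \<le> k" "k \<le> n-1"
  shows "Lv (mB n s) k = s" "Tv (mB n s) k = s" "Rv (mB n s) k = s" "Bv (mB n s) k = -s"
  using creases_vert[OF assms] mods[OF assms(1)] unfolding mB_def Lv_def Tv_def Rv_def Bv_def by simp_all

lemma mT_vals: assumes "1 \<le> k" "k \<le> n-1"
  shows "Lv (mT n s) k = s" "Tv (mT n s) k = -s" "Rv (mT n s) k = s" "Bv (mT n s) k = s"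
  using creases_vert[OF assms] mods[OF assms(1)] unfolding mT_def Lv_def Tv_def Rv_def Bv_def by simp_all


lemma mB_LV: assumes "s \<in> {1,-1}" shows "mB n s \<in> LV n"
proof -
  have "mB n s \<in> MV n" using assms unfolding MV_def mB_def by auto
  moreover have "valid_at (mB n s) k" if "k \<in> {1..n-1}" for k
  proof -
    have k: "1 \<le> k" "k \<le> n-1" using that by auto
    have ns: "-s \<noteq> s" using assms by auto
    have "ex1 (Tv (mB n s) k \<noteq> Lv (mB n s) k) (Rv (mB n s) k \<noteq> Lv (mB n s) k) (Bv (mB n s) k \<noteq> Lv (mB n s) k)"
      unfolding mB_vals[OF k] ex1_def using ns by auto
    then show ?thesis unfolding valid_at_iff[OF k(1)] Lv_def Tv_def Rv_def Bv_def .
  qed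
  ultimately show ?thesis by (auto simp: LV_def locally_valid_def)
qed

lemma mT_LV: assumes "s \<in> {1,-1}" shows "mT n s \<in> LV n"
proof -
  have "mT n s \<in> MV n" using assms unfolding MV_def mT_def by auto
  moreover have "valid_at (mT n s) k" if "k \<in> {1..n-1}" for k
  proof -
    have k: "1 \<le> k" "k \<le> n-1" using that by auto
    have ns: "-s \<noteq> s" using assms by auto
    have "ex1 (Tv (mT n s) k \<noteq> Lv (mT n s) k) (Rv (mT n s) k \<noteq> Lv (mT n s) k) (Bv (mT n s) k \<noteq> Lv (mT n s) k)"
      unfolding mT_vals[OF k] ex1_def using ns by auto
    then show ?thesis unfolding valid_at_iff[OF k(1)] Lv_def Tv_def Rv_def Bv_def .
  qed
  ultimately show ?thesis by (auto simp: LV_def locally_valid_def)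
qed

lemma mB_nflip: assumes "s \<in> {1,-1}" "n \<ge> 1" shows "nflip n (mB n s) = 2"
proof -
  note L = mB_LV[OF assms(1), of n]
  have ns: "-s \<noteq> s" using assms by auto
  have "{a \<in> faces n. flippable n (mB n s) a} = {(1,1),(2,n)}"
  proof (intro set_eqI iffI)
    fix a assume "a \<in> {a \<in> faces n. flippable n (mB n s) a}"
    then obtain i j where a: "a = (i,j)" "i = 1 \<or> i = 2" "1 \<le> j" "j \<le> n" "flippable n (mB n s) (i,j)"
      by (auto simp: faces_def)
    show "a \<in> {(1,1),(2,n)}"
    proof (cases "i = 1")
      case True
      have "j = 1"
      proof (rule ccontr)
        assume "j \<noteq> 1"
        then have jm: "j - 1 \<in> {1..n-1}" "Suc (j-1) = j" using a by auto
        have "Bv (mB n s) (j-1) = Lv (mB n s) (j-1)"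
          using a(5)[unfolded True] jm unfolding flippable1[OF L a(3)] by blast
        then show False using mB_vals[of "j-1" n s] jm ns by auto
      qed
      then show ?thesis using a True by auto
    next
      case False
      then have i: "i = 2" using a(2) by auto
      have "j = n"
      proof (rule ccontr)
        assume "j \<noteq> n"
        then have jm: "j \<in> {1..n-1}" using a by auto
        have "Bv (mB n s) j = Lv (mB n s) j"
          using a(5)[unfolded i] jm unfolding flippable2[OF L a(3)] by blast
        then show False using mB_vals[of j n s] jm ns by auto
      qed
      then show ?thesis using a i by auto
    qed
  next
    fix a assume "a \<in> {(1::nat,1::nat),(2,n)}"
    show "a \<in> {a \<in> faces n. flippable n (mB n s) a}"
    proof -
      have f1: "flippable n (mB n s) (1,1)" unfolding flippable1[OF L order_refl] by (auto simp: mB_vals)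
      have f2: "flippable n (mB n s) (2,n)" unfolding flippable2[OF L assms(2)] by (auto simp: mB_vals)
      show ?thesis using f1 f2 assms \<open>a \<in> _\<close> by (auto simp: faces_def)
    qed
  qed
  moreover have "(1::nat,1::nat) \<noteq> (2,n)" by simp
  ultimately show ?thesis unfolding nflip_def by simp
qed

lemma mT_nflip: assumes "s \<in> {1,-1}" "n \<ge> 1" shows "nflip n (mT n s) = 2"
proof -
  note L = mT_LV[OF assms(1), of n]
  have ns: "-s \<noteq> s" using assms by auto
  have "{a \<in> faces n. flippable n (mT n s) a} = {(2,1),(1,n)}"
  proof (intro set_eqI iffI)
    fix a assume "a \<in> {a \<in> faces n. flippable n (mT n s) a}"
    then obtain i j where a: "a = (i,j)" "i = 1 \<or> i = 2" "1 \<le> j" "j \<le> n" "flippable n (mT n s) (i,j)"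
      by (auto simp: faces_def)
    show "a \<in> {(2,1),(1,n)}"
    proof (cases "i = 2")
      case True
      have "j = 1"
      proof (rule ccontr)
        assume "j \<noteq> 1"
        then have jm: "j - 1 \<in> {1..n-1}" "Suc (j-1) = j" using a by auto
        have "Tv (mT n s) (j-1) = Lv (mT n s) (j-1)"
          using a(5)[unfolded True] jm unfolding flippable2[OF L a(3)] by blast
        then show False using mT_vals[of "j-1" n s] jm ns by auto
      qed
      then show ?thesis using a True by auto
    next
      case False
      then have i: "i = 1" using a(2) by auto
      have "j = n"
      proof (rule ccontr)
        assume "j \<noteq> n"
        then have jm: "j \<in> {1..n-1}" using a by auto
        have "Tv (mT n s) j = Lv (mT n s) j"
          using a(5)[unfolded i] jm unfolding flippable1[OF L a(3)] by blast
        then show False using mT_vals[of j n s] jm ns by auto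
      qed
      then show ?thesis using a i by auto
    qed
  next
    fix a assume "a \<in> {(2::nat,1::nat),(1,n)}"
    show "a \<in> {a \<in> faces n. flippable n (mT n s) a}"
    proof -
      have f1: "flippable n (mT n s) (2,1)" unfolding flippable2[OF L order_refl] by (auto simp: mT_vals)
      have f2: "flippable n (mT n s) (1,n)" unfolding flippable1[OF L assms(2)] by (auto simp: mT_vals)
      show ?thesis using f1 f2 assms \<open>a \<in> _\<close> by (auto simp: faces_def)
    qed
  qed
  moreover have "(2::nat,1::nat) \<noteq> (1,n)" by simp
  ultimately show ?thesis unfolding nflip_def by simp
qed

lemma Lconst: assumes "\<forall>k\<in>{1..n-1}. Rv mu k = Lv mu k"
  shows "\<forall>k\<in>{1..n-1}. Lv mu k = mu 0"
proof -
  have "1 \<le> k \<longrightarrow> k \<le> n-1 \<longrightarrow> Lv mu k = mu 0" for k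
  proof (induction k)
    case 0 then show ?case by simp
  next
    case (Suc k)
    show ?case
    proof (cases "k = 0")
      case True then show ?thesis by (simp add: Lv_def)
    next
      case False
      have e: "Lv mu (Suc k) = Rv mu k" unfolding Lv_def Rv_def by simp
      show ?thesis using Suc.IH False assms e by auto
    qed
  qed
  then show ?thesis by auto
qed

lemma zero_cr: "0 \<in> creases n" by (simp add: creases_def)

lemma to_m:
  assumes mu: "mu \<in> LV n"
    and hB: "\<forall>k\<in>{1..n-1}. Bv mu k \<noteq> Lv mu k \<and> Tv mu k = Lv mu k \<and> Rv mu k = Lv mu k
                         \<or> Tv mu k \<noteq> Lv mu k \<and> Bv mu k = Lv mu k \<and> Rv mu k = Lv mu k"
    and m: "\<And>k c. k \<in> {1..n-1} \<Longrightarrow> c = 3*k-1 \<or> c = 3*k+1 \<Longrightarrow> mu c \<noteq> mu 0 \<Longrightarrow> mm c = - mu 0"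
    and m2: "\<And>k c. k \<in> {1..n-1} \<Longrightarrow> c = 3*k-1 \<or> c = 3*k+1 \<Longrightarrow> mu c = mu 0 \<Longrightarrow> mm c = mu 0"
    and m3: "\<And>k. k \<in> {1..n-1} \<Longrightarrow> mm (3*k) = mu 0"
    and m0: "mm 0 = mu 0" and mout: "\<And>c. c \<notin> creases n \<Longrightarrow> mm c = 0"
  shows "mu = mm"
proof
  fix c
  have mv: "mu \<in> MV n" using mu by (auto simp: LV_def locally_valid_def)
  have L: "\<forall>k\<in>{1..n-1}. Lv mu k = mu 0" using Lconst hB by auto
  have s: "mu 0 \<in> {1,-1}" using MV_pm[OF mv zero_cr] .
  show "mu c = mm c"
  proof (cases "c \<in> creases n")
    case False then show ?thesis using mv mout by (auto simp: MV_def)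
  next
    case True
    have pm: "mu c \<in> {1,-1}" using MV_pm[OF mv True] .
    from True consider "c = 0" | k where "k \<in> {1..n-1}" "c = 3*k-1 \<or> c = 3*k+1" | k where "k \<in> {1..n-1}" "c = 3*k"
      unfolding creases_iff by auto
    then show ?thesis
    proof cases
      case 1 then show ?thesis using m0 by simp
    next
      case (2 k)
      show ?thesis
      proof (cases "mu c = mu 0")
        case True then show ?thesis using m2[OF 2] by simp
      next
        case False then show ?thesis using m[OF 2 False] pm s by auto
      qed
    next
      case (3 k)
      have "mu c = Rv mu k" unfolding Rv_def 3(2) ..
      then show ?thesis using m3[OF 3(1)] 3 hB L by auto
    qed
  qed
qed

lemma to_mB:
  assumes mu: "mu \<in> LV n" and hB: "\<forall>k\<in>{1..n-1}. Bv mu k \<noteq> Lv mu k"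
  shows "mu = mB n (mu 0)"
proof (rule to_m[OF mu])
  have h: "\<forall>k\<in>{1..n-1}. Bv mu k \<noteq> Lv mu k \<and> Tv mu k = Lv mu k \<and> Rv mu k = Lv mu k"
    using hB TB(3)[OF mu] by auto
  then show "\<forall>k\<in>{1..n-1}. Bv mu k \<noteq> Lv mu k \<and> Tv mu k = Lv mu k \<and> Rv mu k = Lv mu k
                         \<or> Tv mu k \<noteq> Lv mu k \<and> Bv mu k = Lv mu k \<and> Rv mu k = Lv mu k" by auto
  have L: "\<forall>k\<in>{1..n-1}. Lv mu k = mu 0" using Lconst h by auto
  show "mB n (mu 0) c = - mu 0" if "k \<in> {1..n-1}" "c = 3*k-1 \<or> c = 3*k+1" "mu c \<noteq> mu 0" for k c
  proof -
    have k: "1 \<le> k" "k \<le> n-1" using that(1) by auto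
    have "c \<noteq> 3*k-1" using that h L unfolding Tv_def by auto
    then have "c = 3*k+1" using that by auto
    then show ?thesis using mB_vals(4)[OF k] unfolding Bv_def by simp
  qed
  show "mB n (mu 0) c = mu 0" if "k \<in> {1..n-1}" "c = 3*k-1 \<or> c = 3*k+1" "mu c = mu 0" for k c
  proof -
    have k: "1 \<le> k" "k \<le> n-1" using that(1) by auto
    have "c \<noteq> 3*k+1" using that h L unfolding Bv_def by auto
    then have "c = 3*k-1" using that by auto
    then show ?thesis using mB_vals(2)[OF k] unfolding Tv_def by simp
  qed
  show "mB n (mu 0) (3*k) = mu 0" if "k \<in> {1..n-1}" for k
    using mB_vals(3)[of k n] that unfolding Rv_def by auto
  show "mB n (mu 0) 0 = mu 0" by (simp add: mB_def zero_cr)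
  show "mB n (mu 0) c = 0" if "c \<notin> creases n" for c using that by (simp add: mB_def)
qed

lemma to_mT:
  assumes mu: "mu \<in> LV n" and hT: "\<forall>k\<in>{1..n-1}. Tv mu k \<noteq> Lv mu k"
  shows "mu = mT n (mu 0)"
proof (rule to_m[OF mu])
  have h: "\<forall>k\<in>{1..n-1}. Tv mu k \<noteq> Lv mu k \<and> Bv mu k = Lv mu k \<and> Rv mu k = Lv mu k"
    using hT TB(2)[OF mu] by auto
  then show "\<forall>k\<in>{1..n-1}. Bv mu k \<noteq> Lv mu k \<and> Tv mu k = Lv mu k \<and> Rv mu k = Lv mu k
                         \<or> Tv mu k \<noteq> Lv mu k \<and> Bv mu k = Lv mu k \<and> Rv mu k = Lv mu k" by auto
  have L: "\<forall>k\<in>{1..n-1}. Lv mu k = mu 0" using Lconst h by auto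
  show "mT n (mu 0) c = - mu 0" if "k \<in> {1..n-1}" "c = 3*k-1 \<or> c = 3*k+1" "mu c \<noteq> mu 0" for k c
  proof -
    have k: "1 \<le> k" "k \<le> n-1" using that(1) by auto
    have "c \<noteq> 3*k+1" using that h L unfolding Bv_def by auto
    then have "c = 3*k-1" using that by auto
    then show ?thesis using mT_vals(2)[OF k] unfolding Tv_def by simp
  qed
  show "mT n (mu 0) c = mu 0" if "k \<in> {1..n-1}" "c = 3*k-1 \<or> c = 3*k+1" "mu c = mu 0" for k c
  proof -
    have k: "1 \<le> k" "k \<le> n-1" using that(1) by auto
    have "c \<noteq> 3*k-1" using that h L unfolding Tv_def by auto
    then have "c = 3*k+1" using that by auto
    then show ?thesis using mT_vals(4)[OF k] unfolding Bv_def by simp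
  qed
  show "mT n (mu 0) (3*k) = mu 0" if "k \<in> {1..n-1}" for k
    using mT_vals(3)[of k n] that unfolding Rv_def by auto
  show "mT n (mu 0) 0 = mu 0" by (simp add: mT_def zero_cr)
  show "mT n (mu 0) c = 0" if "c \<notin> creases n" for c using that by (simp add: mT_def)
qed

lemma creases_mono1: "c \<in> creases (n-1) \<Longrightarrow> c \<in> creases n"
  unfolding creases_iff by (metis (no_types) diff_le_self order_trans)

lemma restr_mB: "restr n (mB n s) = mB (n-1) s"
proof
  fix c show "restr n (mB n s) c = mB (n-1) s c"
    using creases_mono1[of c n] unfolding restr_def mB_def by (cases "c \<in> creases (n-1)") simp_all
qed

lemma restr_mT: "restr n (mT n s) = mT (n-1) s"
proof
  fix c show "restr n (mT n s) c = mT (n-1) s c"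
    using creases_mono1[of c n] unfolding restr_def mT_def by (cases "c \<in> creases (n-1)") simp_all
qed

lemma two_cr: "n \<ge> 2 \<Longrightarrow> 2 \<in> creases n"
  using creases_vert(2)[of 1 n] by simp

lemma char4:
  assumes "n \<ge> 2"
  shows "{mu \<in> LV n. nflip n mu = 2} = {mB n 1, mB n (-1), mT n 1, mT n (-1)}"
proof (intro set_eqI iffI)
  fix mu assume "mu \<in> {mu \<in> LV n. nflip n mu = 2}"
  then have mu: "mu \<in> LV n" and f: "nflip n mu \<le> 2" by auto
  have s: "mu 0 = 1 \<or> mu 0 = -1" using MV_pm[OF _ zero_cr, of mu n] mu by (auto simp: LV_def locally_valid_def)
  from upper[OF mu assms f] show "mu \<in> {mB n 1, mB n (-1), mT n 1, mT n (-1)}"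
  proof
    assume "\<forall>k\<in>{1..n-1}. Bv mu k \<noteq> Lv mu k"
    then have "mu = mB n (mu 0)" using to_mB[OF mu] by blast
    then show ?thesis using s by auto
  next
    assume "\<forall>k\<in>{1..n-1}. Tv mu k \<noteq> Lv mu k"
    then have "mu = mT n (mu 0)" using to_mT[OF mu] by blast
    then show ?thesis using s by auto
  qed
next
  fix mu assume h: "mu \<in> {mB n 1, mB n (-1), mT n 1, mT n (-1)}"
  have o: "(1::int) \<in> {1,-1}" "(-1::int) \<in> {1,-1}" by auto
  have n1: "n \<ge> 1" using assms by auto
  from h consider "mu = mB n 1" | "mu = mB n (-1)" | "mu = mT n 1" | "mu = mT n (-1)" by blast
  then show "mu \<in> {mu \<in> LV n. nflip n mu = 2}"
  proof cases
    case 1 then show ?thesis using mB_LV[OF o(1)] mB_nflip[OF o(1) n1] by simp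
  next
    case 2 then show ?thesis using mB_LV[OF o(2)] mB_nflip[OF o(2) n1] by simp
  next
    case 3 then show ?thesis using mT_LV[OF o(1)] mT_nflip[OF o(1) n1] by simp
  next
    case 4 then show ?thesis using mT_LV[OF o(2)] mT_nflip[OF o(2) n1] by simp
  qed
qed

lemma distinct4:
  assumes "n \<ge> 2"
  shows "card {mB n 1, mB n (-1), mT n 1, mT n (-1)} = 4"
proof -
  have a: "mB n s 0 = s" "mT n s 0 = s" for s by (simp_all add: mB_def mT_def zero_cr)
  have b: "mB n s 2 = s" "mT n s 2 = -s" for s using two_cr[OF assms] by (simp_all add: mB_def mT_def)
  have d1: "mB n 1 \<noteq> mB n (-1)" using a(1)[of 1] a(1)[of "-1"] by (metis one_neq_neg_one)
  have d2: "mT n 1 \<noteq> mT n (-1)" using a(2)[of 1] a(2)[of "-1"] by (metis one_neq_neg_one)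
  have d3: "mB n s \<noteq> mT n t" if "s \<in> {1,-1}" "t \<in> {1,-1}" for s t
  proof
    assume "mB n s = mT n t"
    then have "mB n s 0 = mT n t 0" "mB n s 2 = mT n t 2" by auto
    then show False using a b that by auto
  qed
  have "mB n 1 \<noteq> mT n 1" "mB n 1 \<noteq> mT n (-1)" "mB n (-1) \<noteq> mT n 1" "mB n (-1) \<noteq> mT n (-1)"
    using d3[of 1 1] d3[of 1 "-1"] d3[of "-1" 1] d3[of "-1" "-1"] by simp_all
  then show ?thesis using d1 d2 by simp
qed

theorem lemma4p5:
  shows "(\<forall>n::nat. n \<ge> 1 \<longrightarrow> Min (nflip n ` LV n) = 2)
       \<and> (\<forall>n::nat. n \<ge> 2 \<longrightarrow>
            card {mu \<in> LV n. nflip n mu = 2} = 4 \<and>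
            (\<forall>mu \<in> LV n. nflip n mu = 2 \<longrightarrow> magenta n mu))"
proof (intro conjI allI impI ballI)
  fix n :: nat assume n: "n \<ge> 1"
  show "Min (nflip n ` LV n) = 2"
  proof (rule Min_eqI)
    have "nflip n ` LV n \<subseteq> {..card (faces n)}" using nflip_le by auto
    then show "finite (nflip n ` LV n)" using finite_subset by blast
    show "y \<ge> 2" if "y \<in> nflip n ` LV n" for y using that lower[OF n] by auto
    have "mB n 1 \<in> LV n" "nflip n (mB n 1) = 2" using mB_LV mB_nflip[OF _ n] by auto
    then show "2 \<in> nflip n ` LV n" by (metis image_eqI)
  qed
next
  fix n :: nat assume n: "n \<ge> 2"
  show "card {mu \<in> LV n. nflip n mu = 2} = 4" using char4[OF n] distinct4[OF n] by simp
next
  fix n :: nat and mu assume n: "n \<ge> 2" and mu: "mu \<in> LV n" and f: "nflip n mu = 2"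
  have n1: "n - 1 \<ge> 1" using n by auto
  have "mu \<in> {mB n 1, mB n (-1), mT n 1, mT n (-1)}" using char4[OF n] mu f by blast
  then consider s where "s \<in> {1,-1}" "mu = mB n s" | s where "s \<in> {1,-1}" "mu = mT n s" by auto
  then have "nflip (n-1) (restr n mu) = 2"
  proof cases
    case 1 then show ?thesis using mB_nflip[OF 1(1) n1] restr_mB[of n s] by simp
  next
    case 2 then show ?thesis using mT_nflip[OF 2(1) n1] restr_mT[of n s] by simp
  qed
  then show "magenta n mu" unfolding magenta_def using f by simp
qed
end
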